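(* Let $A$ with projections $\pi_B:A\to B$, $\pi_C:A\to C$ be a pullback in $\mathbf{Sets}$ of $f_1:B\to D$ and $g_1:C\to D$, where $g_1$ is injective. Then $\mathcal{PP}_b(A)$ with $\mathcal{PP}_b(\pi_B),\mathcal{PP}_b(\pi_C)$ is a pullback of $\mathcal{PP}_b(f_1)$ and $\mathcal{PP}_b(g_1)$ in $\mathbf{Sets}$.
   Context: For a set $M$ whose elements are treated as atoms (urelements, distinct from every set built below), let $T_1=\mathcal{P}(M)$, $T_{n+1}=T_n\cup\mathcal{P}(T_n)$, and $\mathcal{PP}_b(M)=\bigcup_{n\ge 1}T_n$. For $f:M\to N$, $\mathcal{PP}_b(f)$ is defined recursively on $X\in\mathcal{PP}_b(M)$ by $\mathcal{PP}_b(f)(X)=\{f(x)\mid x\in X\cap M\}\cup\{\mathcal{PP}_b(f)(x)\mid x\in X\setminus M\}$; this makes $\mathcal{PP}_b$ a functor $\mathbf{Sets}\to\mathbf{Sets}$. *)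

theory Defs
  imports Main
begin

text \<open>
  No single HOL type built from the atom type can contain
  PP_b(M) (its cardinality is beth_omega(|M|)), so PP_b(M) lives in an arbitrary
  universe type 'v equipped with a set-former  mk :: ('a + 'v) set => 'v.
  A raw set S :: ('a + 'v) set has atoms  Inl a  (urelements, distinct from every
  set) and set-elements  Inr x;  mk S is the set with these members.
  pp_raw mk M n  is the family of raw sets whose images form T_(n+1).
\<close>

primrec pp_raw :: "(('a + 'v) set \<Rightarrow> 'v) \<Rightarrow> 'a set \<Rightarrow> nat \<Rightarrow> ('a + 'v) set set" where
  "pp_raw mk M 0 = Pow (Inl ` M)"
| "pp_raw mk M (Suc n) = pp_raw mk M n \<union> Pow (Inr ` (mk ` pp_raw mk M n))"

text \<open>T_n = mk ` pp_raw mk M (n - 1); PP_b(M) is the union of all levels.\<close>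
definition PPb :: "(('a + 'v) set \<Rightarrow> 'v) \<Rightarrow> 'a set \<Rightarrow> 'v set" where
  "PPb mk M = mk ` (\<Union>n. pp_raw mk M n)"

text \<open>The universe is adequate for M: mk is injective on all raw sets needed
  (extensionality: distinct sets are distinct elements of 'v).\<close>
definition pp_universe :: "(('a + 'v) set \<Rightarrow> 'v) \<Rightarrow> 'a set \<Rightarrow> bool" where
  "pp_universe mk M \<longleftrightarrow> inj_on mk (\<Union>n. pp_raw mk M n)"

text \<open>Graph of PP_b(f), following the recursive definition
  PP_b(f)(X) = {f x | x in X cap M} cup {PP_b(f)(x) | x in X - M}.\<close>
inductive ppgraph :: "(('a + 'v) set \<Rightarrow> 'v) \<Rightarrow> (('b + 'w) set \<Rightarrow> 'w) \<Rightarrow> 'a set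
    \<Rightarrow> ('a \<Rightarrow> 'b) \<Rightarrow> 'v \<Rightarrow> 'w \<Rightarrow> bool"
  for mk :: "('a + 'v) set \<Rightarrow> 'v" and mk' :: "('b + 'w) set \<Rightarrow> 'w" and M f where
  "S \<in> (\<Union>n. pp_raw mk M n) \<Longrightarrow> (\<forall>x. Inr x \<in> S \<longrightarrow> ppgraph mk mk' M f x (g x)) \<Longrightarrow>
   ppgraph mk mk' M f (mk S)
     (mk' ((\<lambda>a. Inl (f a)) ` {a. Inl a \<in> S} \<union> (\<lambda>x. Inr (g x)) ` {x. Inr x \<in> S}))"

definition ppmap :: "(('a + 'v) set \<Rightarrow> 'v) \<Rightarrow> (('b + 'w) set \<Rightarrow> 'w) \<Rightarrow> 'a set
    \<Rightarrow> ('a \<Rightarrow> 'b) \<Rightarrow> 'v \<Rightarrow> 'w" where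
  "ppmap mk mk' M f v = (THE w. ppgraph mk mk' M f v w)"

definition is_pullback :: "'p set \<Rightarrow> 'b set \<Rightarrow> 'c set \<Rightarrow> 'd set \<Rightarrow> ('p \<Rightarrow> 'b) \<Rightarrow> ('p \<Rightarrow> 'c)
    \<Rightarrow> ('b \<Rightarrow> 'd) \<Rightarrow> ('c \<Rightarrow> 'd) \<Rightarrow> bool" where
  "is_pullback P B C D p q f g \<longleftrightarrow>
     p ` P \<subseteq> B \<and> q ` P \<subseteq> C \<and> f ` B \<subseteq> D \<and> g ` C \<subseteq> D \<and>
     (\<forall>x\<in>P. f (p x) = g (q x)) \<and>
     (\<forall>b\<in>B. \<forall>c\<in>C. f b = g c \<longrightarrow> (\<exists>!x. x \<in> P \<and> p x = b \<and> q x = c))"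

end

theory Submission
  imports Defs
begin


abbreviation RR :: "(('a + 'v) set \<Rightarrow> 'v) \<Rightarrow> 'a set \<Rightarrow> ('a + 'v) set set" where
  "RR mk M \<equiv> (\<Union>n. pp_raw mk M n)"

definition rimg :: "('a \<Rightarrow> 'b) \<Rightarrow> ('v \<Rightarrow> 'w) \<Rightarrow> ('a + 'v) set \<Rightarrow> ('b + 'w) set" where
  "rimg f F S = (\<lambda>a. Inl (f a)) ` {a. Inl a \<in> S} \<union> (\<lambda>x. Inr (F x)) ` {x. Inr x \<in> S}"

lemma rimg_Inl[simp]: "Inl b \<in> rimg f F S \<longleftrightarrow> (\<exists>a. Inl a \<in> S \<and> b = f a)"
  by (auto simp: rimg_def)
lemma rimg_Inr[simp]: "Inr y \<in> rimg f F S \<longleftrightarrow> (\<exists>x. Inr x \<in> S \<and> y = F x)"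
  by (auto simp: rimg_def)

lemma rimg_comp: "rimg f F (rimg p P S) = rimg (f \<circ> p) (F \<circ> P) S"
  by (auto simp: rimg_def)

lemma rimg_cong: "(\<And>a. Inl a \<in> S \<Longrightarrow> f a = f' a) \<Longrightarrow> (\<And>x. Inr x \<in> S \<Longrightarrow> F x = F' x)
   \<Longrightarrow> rimg f F S = rimg f' F' S"
  unfolding rimg_def by (auto simp: image_iff)

lemma pp_mono: "m \<le> n \<Longrightarrow> pp_raw mk M m \<subseteq> pp_raw mk M n"
  by (induction n) (auto simp: le_Suc_eq)

lemma pp_shape: "S \<in> pp_raw mk M n \<Longrightarrow> S \<subseteq> Inl ` M \<or> (\<exists>m. n = Suc m \<and> S \<subseteq> Inr ` mk ` pp_raw mk M m)"
proof (induction n arbitrary: S)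
  case 0 then show ?case by auto
next
  case (Suc n)
  show ?case
  proof (cases "S \<in> pp_raw mk M n")
    case True
    from Suc.IH[OF True] show ?thesis
    proof
      assume "\<exists>m. n = Suc m \<and> S \<subseteq> Inr ` mk ` pp_raw mk M m"
      then obtain m where m: "n = Suc m" "S \<subseteq> Inr ` mk ` pp_raw mk M m" by blast
      have "pp_raw mk M m \<subseteq> pp_raw mk M n" using m(1) by (intro pp_mono) simp
      with m(2) have "S \<subseteq> Inr ` mk ` pp_raw mk M n" by blast
      then show ?thesis by blast
    qed simp
  next
    case False with Suc.prems show ?thesis by auto
  qed
qed

lemma subInl: "S \<subseteq> Inl ` M \<Longrightarrow> Inl a \<in> S \<Longrightarrow> a \<in> M"
  by auto

lemma subInl2: "S \<subseteq> Inl ` M \<Longrightarrow> Inr x \<notin> S"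
  by auto

lemma pp_atoms:
  assumes S: "S \<in> pp_raw mk M n" and a: "Inl a \<in> S" shows "a \<in> M"
  using pp_shape[OF S]
proof
  assume "S \<subseteq> Inl ` M" then show ?thesis using a by (rule subInl)
next
  assume "\<exists>m. n = Suc m \<and> S \<subseteq> Inr ` mk ` pp_raw mk M m"
  then obtain m where "S \<subseteq> Inr ` mk ` pp_raw mk M m" by blast
  with a show ?thesis by auto
qed

lemma RR_atoms: "S \<in> RR mk M \<Longrightarrow> Inl a \<in> S \<Longrightarrow> a \<in> M"
  by (auto intro: pp_atoms)

lemma pp_sets:
  assumes S: "S \<in> pp_raw mk M n" and x: "Inr x \<in> S"
  shows "\<exists>m S'. n = Suc m \<and> S' \<in> pp_raw mk M m \<and> x = mk S'"
  using pp_shape[OF S]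
proof
  assume "S \<subseteq> Inl ` M" then show ?thesis using x subInl2 by metis
next
  assume "\<exists>m. n = Suc m \<and> S \<subseteq> Inr ` mk ` pp_raw mk M m"
  then obtain m where m: "n = Suc m" "S \<subseteq> Inr ` mk ` pp_raw mk M m" by blast
  with x have "Inr x \<in> Inr ` mk ` pp_raw mk M m" by blast
  then obtain S' where "S' \<in> pp_raw mk M m" "x = mk S'" by auto
  with m show ?thesis by blast
qed

lemma RR_sets:
  assumes S: "S \<in> RR mk M" and x: "Inr x \<in> S" shows "x \<in> mk ` RR mk M"
proof -
  from S obtain n where "S \<in> pp_raw mk M n" by blast
  from pp_sets[OF this x] obtain m S' where "S' \<in> pp_raw mk M m" "x = mk S'" by blast
  then show ?thesis by blast
qed

lemma RR_induct:
  assumes step: "\<And>S. S \<in> RR mk M \<Longrightarrow> (\<And>x. Inr x \<in> S \<Longrightarrow> P x) \<Longrightarrow> P (mk S)"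
  and S: "S \<in> RR mk M"
  shows "P (mk S)"
proof -
  have "\<forall>S \<in> pp_raw mk M n. P (mk S)" for n
  proof (induction n rule: less_induct)
    case (less n)
    show ?case
    proof
      fix S assume Sn: "S \<in> pp_raw mk M n"
      show "P (mk S)"
      proof (rule step)
        show "S \<in> RR mk M" using Sn by blast
        fix x assume "Inr x \<in> S"
        from pp_sets[OF Sn this] obtain m S' where "n = Suc m" "S' \<in> pp_raw mk M m" "x = mk S'" by blast
        with less show "P x" by auto
      qed
    qed
  qed
  with S show ?thesis by blast
qed

lemma PP_induct:
  assumes "z \<in> mk ` RR mk M"
  and step: "\<And>S. S \<in> RR mk M \<Longrightarrow> (\<And>x. Inr x \<in> S \<Longrightarrow> P x) \<Longrightarrow> P (mk S)"
  shows "P z"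
  using assms(1) RR_induct[of mk M P, OF step] by blast

lemma pg_intro: "S \<in> RR mk M \<Longrightarrow> (\<forall>x. Inr x \<in> S \<longrightarrow> ppgraph mk mk' M f x (g x))
  \<Longrightarrow> ppgraph mk mk' M f (mk S) (mk' (rimg f g S))"
  unfolding rimg_def by (rule ppgraph.intros)

lemma G_unique:
  assumes inj: "inj_on mk (RR mk M)"
  shows "ppgraph mk mk' M f v w1 \<Longrightarrow> ppgraph mk mk' M f v w2 \<Longrightarrow> w1 = w2"
proof (induction arbitrary: w2 rule: ppgraph.induct)
  case (1 S g)
  note SR = 1(1) and IH = 1(2)
  from 1(3) show ?case
  proof (cases rule: ppgraph.cases)
    case (1 S2 g2)
    note c = this
    have SS: "S = S2" using inj SR c(3) c(1) by (simp add: inj_on_eq_iff)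
    have "rimg f g S = rimg f g2 S2"
      unfolding SS
    proof (rule rimg_cong)
      fix x assume x: "Inr x \<in> S2"
      then have "ppgraph mk mk' M f x (g2 x)" using c(4) by blast
      moreover have "\<forall>w2. ppgraph mk mk' M f x w2 \<longrightarrow> g x = w2" using IH x SS by blast
      ultimately show "g x = g2 x" by blast
    qed simp
    then show ?thesis using c(2) unfolding rimg_def by simp
  qed
qed

lemma G_exists:
  assumes fM: "f ` M \<subseteq> N"
  shows "S \<in> pp_raw mk M n \<Longrightarrow> \<exists>w. ppgraph mk mk' M f (mk S) w \<and> w \<in> mk' ` pp_raw mk' N n"
proof (induction n arbitrary: S rule: less_induct)
  case (less n)
  have SR: "S \<in> RR mk M" using less.prems by blast
  from pp_shape[OF less.prems] show ?case
  proof
    assume L: "S \<subseteq> Inl ` M"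
    let ?g = "\<lambda>x. undefined"
    have "ppgraph mk mk' M f (mk S) (mk' (rimg f ?g S))"
      using L by (intro pg_intro SR) auto
    moreover have "rimg f ?g S \<in> pp_raw mk' N 0"
      using L fM by (auto simp: rimg_def dest: subInl subInl2)
    then have "rimg f ?g S \<in> pp_raw mk' N n" using pp_mono[of 0 n] by blast
    ultimately show ?thesis by blast
  next
    assume "\<exists>m. n = Suc m \<and> S \<subseteq> Inr ` mk ` pp_raw mk M m"
    then obtain m where m: "n = Suc m" "S \<subseteq> Inr ` mk ` pp_raw mk M m" by blast
    have "\<forall>x. \<exists>w. Inr x \<in> S \<longrightarrow> ppgraph mk mk' M f x w \<and> w \<in> mk' ` pp_raw mk' N m"
    proof
      fix x show "\<exists>w. Inr x \<in> S \<longrightarrow> ppgraph mk mk' M f x w \<and> w \<in> mk' ` pp_raw mk' N m"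
      proof (cases "Inr x \<in> S")
        case True
        then obtain S' where "S' \<in> pp_raw mk M m" "x = mk S'" using m by blast
        with less.IH[of m S'] m(1) show ?thesis by auto
      qed simp
    qed
    then obtain g where g: "\<forall>x. Inr x \<in> S \<longrightarrow> ppgraph mk mk' M f x (g x) \<and> g x \<in> mk' ` pp_raw mk' N m"
      by metis
    have "ppgraph mk mk' M f (mk S) (mk' (rimg f g S))"
      using g by (intro pg_intro SR) auto
    moreover have "rimg f g S \<in> pp_raw mk' N n"
      using m g by (auto simp: rimg_def)
    ultimately show ?thesis by blast
  qed
qed

lemma pm_level:
  assumes inj: "inj_on mk (RR mk M)" and fM: "f ` M \<subseteq> N" and S: "S \<in> pp_raw mk M n"
  shows "ppgraph mk mk' M f (mk S) (ppmap mk mk' M f (mk S)) \<and> ppmap mk mk' M f (mk S) \<in> mk' ` pp_raw mk' N n"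
proof -
  obtain w where w: "ppgraph mk mk' M f (mk S) w" "w \<in> mk' ` pp_raw mk' N n"
    using G_exists[where mk'=mk', OF fM S] by (elim exE conjE)
  have "ppmap mk mk' M f (mk S) = w"
    unfolding ppmap_def
  proof (rule the_equality)
    show "ppgraph mk mk' M f (mk S) w" by (rule w(1))
    fix w' assume "ppgraph mk mk' M f (mk S) w'"
    from G_unique[OF inj this w(1)] show "w' = w" .
  qed
  with w show ?thesis by (simp only:)
qed

lemma pm_graph:
  assumes inj: "inj_on mk (RR mk M)" and fM: "f ` M \<subseteq> N" and S: "S \<in> RR mk M"
  shows "ppgraph mk mk' M f (mk S) (ppmap mk mk' M f (mk S))"
proof -
  from S obtain n where "S \<in> pp_raw mk M n" by blast
  from pm_level[where mk'=mk', OF inj fM this] show ?thesis by (rule conjunct1)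
qed

lemma pm_simp:
  assumes inj: "inj_on mk (RR mk M)" and fM: "f ` M \<subseteq> N" and S: "S \<in> RR mk M"
  shows "ppmap mk mk' M f (mk S) = mk' (rimg f (ppmap mk mk' M f) S)"
proof -
  have g: "ppgraph mk mk' M f (mk S) (mk' (rimg f (ppmap mk mk' M f) S))"
  proof (intro pg_intro S allI impI)
    fix x assume "Inr x \<in> S"
    from RR_sets[OF S this] obtain S' where S': "S' \<in> RR mk M" "x = mk S'" by blast
    from pm_graph[where mk'=mk', OF inj fM S'(1)] S'(2)
    show "ppgraph mk mk' M f x (ppmap mk mk' M f x)" by simp
  qed
  from G_unique[OF inj pm_graph[where mk'=mk', OF inj fM S] g] show ?thesis .
qed

lemma rimg_level:
  assumes inj: "inj_on mk (RR mk M)" and fM: "f ` M \<subseteq> N" and S: "S \<in> pp_raw mk M n"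
  shows "rimg f (ppmap mk mk' M f) S \<in> pp_raw mk' N n"
  using pp_shape[OF S]
proof
  assume L: "S \<subseteq> Inl ` M"
  then have "rimg f (ppmap mk mk' M f) S \<in> pp_raw mk' N 0"
    using L fM by (auto simp: rimg_def dest: subInl subInl2)
  then show ?thesis using pp_mono[of 0 n] by blast
next
  assume "\<exists>m. n = Suc m \<and> S \<subseteq> Inr ` mk ` pp_raw mk M m"
  then obtain m where m: "n = Suc m" "S \<subseteq> Inr ` mk ` pp_raw mk M m" by blast
  have "rimg f (ppmap mk mk' M f) S \<subseteq> Inr ` mk' ` pp_raw mk' N m"
  proof
    fix y assume y: "y \<in> rimg f (ppmap mk mk' M f) S"
    show "y \<in> Inr ` mk' ` pp_raw mk' N m"
    proof (cases y)
      case (Inl b)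
      with y obtain a where "Inl a \<in> S" by auto
      with m(2) have False by auto
      then show ?thesis ..
    next
      case (Inr z)
      with y obtain x where x: "Inr x \<in> S" "z = ppmap mk mk' M f x" by auto
      from x(1) m(2) have "Inr x \<in> Inr ` mk ` pp_raw mk M m" by blast
      then obtain S' where S': "S' \<in> pp_raw mk M m" "x = mk S'" by auto
      from pm_level[where mk'=mk', OF inj fM S'(1)] S'(2) x(2) have "z \<in> mk' ` pp_raw mk' N m" by simp
      with Inr show ?thesis by simp
    qed
  qed
  then show ?thesis using m(1) by simp
qed

lemma rimg_RR:
  assumes inj: "inj_on mk (RR mk M)" and fM: "f ` M \<subseteq> N" and S: "S \<in> RR mk M"
  shows "rimg f (ppmap mk mk' M f) S \<in> RR mk' N"
proof -
  from S obtain n where "S \<in> pp_raw mk M n" by blast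
  from rimg_level[where mk'=mk', OF inj fM this] show ?thesis by blast
qed

lemma pm_PP:
  assumes inj: "inj_on mk (RR mk M)" and fM: "f ` M \<subseteq> N" and z: "z \<in> mk ` RR mk M"
  shows "ppmap mk mk' M f z \<in> mk' ` RR mk' N"
proof -
  from z obtain S where S: "S \<in> RR mk M" "z = mk S" by blast
  from pm_simp[where mk'=mk', OF inj fM S(1)] rimg_RR[where mk'=mk', OF inj fM S(1)] S(2) show ?thesis by simp
qed



locale pbk =
  fixes A :: "'a set" and B :: "'b set" and C :: "'c set" and D :: "'d set"
    and piB :: "'a \<Rightarrow> 'b" and piC :: "'a \<Rightarrow> 'c"
    and f1 :: "'b \<Rightarrow> 'd" and g1 :: "'c \<Rightarrow> 'd"
    and mkA :: "('a + 'va) set \<Rightarrow> 'va" and mkB :: "('b + 'vb) set \<Rightarrow> 'vb"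
    and mkC :: "('c + 'vc) set \<Rightarrow> 'vc" and mkD :: "('d + 'vd) set \<Rightarrow> 'vd"
  assumes pb: "is_pullback A B C D piB piC f1 g1"
    and ginj: "inj_on g1 C"
    and uA: "inj_on mkA (RR mkA A)" and uB: "inj_on mkB (RR mkB B)"
    and uC: "inj_on mkC (RR mkC C)" and uD: "inj_on mkD (RR mkD D)"
begin

abbreviation "PBm \<equiv> ppmap mkA mkB A piB"
abbreviation "PCm \<equiv> ppmap mkA mkC A piC"
abbreviation "PFm \<equiv> ppmap mkB mkD B f1"
abbreviation "PGm \<equiv> ppmap mkC mkD C g1"

lemma piBA: "piB ` A \<subseteq> B" and piCA: "piC ` A \<subseteq> C" and f1B: "f1 ` B \<subseteq> D" and g1C: "g1 ` C \<subseteq> D"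
  using pb unfolding is_pullback_def by auto

lemma comm1: "a \<in> A \<Longrightarrow> f1 (piB a) = g1 (piC a)"
  using pb unfolding is_pullback_def by auto

lemma pbex: "b \<in> B \<Longrightarrow> c \<in> C \<Longrightarrow> f1 b = g1 c \<Longrightarrow> \<exists>a. a \<in> A \<and> piB a = b \<and> piC a = c"
  using pb unfolding is_pullback_def by blast

lemma pbuniq:
  assumes a: "a \<in> A" and a': "a' \<in> A" and eB: "piB a = piB a'" and eC: "piC a = piC a'"
  shows "a = a'"
proof -
  have "piB a \<in> B" "piC a \<in> C" using a piBA piCA by auto
  moreover have "f1 (piB a) = g1 (piC a)" using comm1 a by simp
  moreover have H: "\<forall>b\<in>B. \<forall>c\<in>C. f1 b = g1 c \<longrightarrow> (\<exists>!x. x \<in> A \<and> piB x = b \<and> piC x = c)"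
    using pb unfolding is_pullback_def by (rule conjunct2[THEN conjunct2, THEN conjunct2, THEN conjunct2, THEN conjunct2])
  ultimately have E: "\<exists>!x. x \<in> A \<and> piB x = piB a \<and> piC x = piC a"
    by simp
  from E obtain x where x: "\<forall>y. y \<in> A \<and> piB y = piB a \<and> piC y = piC a \<longrightarrow> y = x"
    by (rule ex1E) (rule that)
  have "a = x" using x a by simp
  moreover have "a' = x" using x a' eB eC by simp
  ultimately show ?thesis by simp
qed

lemma sB: "S \<in> RR mkA A \<Longrightarrow> PBm (mkA S) = mkB (rimg piB PBm S)"
  by (rule pm_simp[where mk'=mkB, OF uA piBA])
lemma sC: "S \<in> RR mkA A \<Longrightarrow> PCm (mkA S) = mkC (rimg piC PCm S)"
  by (rule pm_simp[where mk'=mkC, OF uA piCA])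
lemma sF: "S \<in> RR mkB B \<Longrightarrow> PFm (mkB S) = mkD (rimg f1 PFm S)"
  by (rule pm_simp[where mk'=mkD, OF uB f1B])
lemma sG: "S \<in> RR mkC C \<Longrightarrow> PGm (mkC S) = mkD (rimg g1 PGm S)"
  by (rule pm_simp[where mk'=mkD, OF uC g1C])

lemma rB: "S \<in> RR mkA A \<Longrightarrow> rimg piB PBm S \<in> RR mkB B"
  by (rule rimg_RR[where mk'=mkB, OF uA piBA])
lemma rC: "S \<in> RR mkA A \<Longrightarrow> rimg piC PCm S \<in> RR mkC C"
  by (rule rimg_RR[where mk'=mkC, OF uA piCA])
lemma rF: "S \<in> RR mkB B \<Longrightarrow> rimg f1 PFm S \<in> RR mkD D"
  by (rule rimg_RR[where mk'=mkD, OF uB f1B])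
lemma rG: "S \<in> RR mkC C \<Longrightarrow> rimg g1 PGm S \<in> RR mkD D"
  by (rule rimg_RR[where mk'=mkD, OF uC g1C])

lemma ppB: "z \<in> mkA ` RR mkA A \<Longrightarrow> PBm z \<in> mkB ` RR mkB B"
  by (rule pm_PP[where mk'=mkB, OF uA piBA])
lemma ppC: "z \<in> mkA ` RR mkA A \<Longrightarrow> PCm z \<in> mkC ` RR mkC C"
  by (rule pm_PP[where mk'=mkC, OF uA piCA])
lemma ppF: "z \<in> mkB ` RR mkB B \<Longrightarrow> PFm z \<in> mkD ` RR mkD D"
  by (rule pm_PP[where mk'=mkD, OF uB f1B])
lemma ppG: "z \<in> mkC ` RR mkC C \<Longrightarrow> PGm z \<in> mkD ` RR mkD D"
  by (rule pm_PP[where mk'=mkD, OF uC g1C])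

lemma comm:
  assumes "z \<in> mkA ` RR mkA A" shows "PFm (PBm z) = PGm (PCm z)"
  using assms
proof (rule PP_induct[where P="\<lambda>z. PFm (PBm z) = PGm (PCm z)"])
  fix S assume S: "S \<in> RR mkA A" and IH: "\<And>x. Inr x \<in> S \<Longrightarrow> PFm (PBm x) = PGm (PCm x)"
  have "PFm (PBm (mkA S)) = mkD (rimg f1 PFm (rimg piB PBm S))"
    using sB[OF S] sF[OF rB[OF S]] by simp
  also have "\<dots> = mkD (rimg g1 PGm (rimg piC PCm S))"
    unfolding rimg_comp
    by (rule arg_cong[where f=mkD], rule rimg_cong) (auto simp: comm1 RR_atoms[OF S] IH)
  also have "\<dots> = PGm (PCm (mkA S))"
    using sC[OF S] sG[OF rC[OF S]] by simp
  finally show "PFm (PBm (mkA S)) = PGm (PCm (mkA S))" .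
qed

lemma PG_inj_all:
  assumes "y1 \<in> mkC ` RR mkC C"
  shows "\<forall>y2 \<in> mkC ` RR mkC C. PGm y1 = PGm y2 \<longrightarrow> y1 = y2"
  using assms
proof (rule PP_induct[where P="\<lambda>y1. \<forall>y2 \<in> mkC ` RR mkC C. PGm y1 = PGm y2 \<longrightarrow> y1 = y2"])
  fix S1 assume S1: "S1 \<in> RR mkC C"
    and IH: "\<And>x. Inr x \<in> S1 \<Longrightarrow> \<forall>y2 \<in> mkC ` RR mkC C. PGm x = PGm y2 \<longrightarrow> x = y2"
  show "\<forall>y2 \<in> mkC ` RR mkC C. PGm (mkC S1) = PGm y2 \<longrightarrow> mkC S1 = y2"
  proof (intro ballI impI)
    fix y2 assume y2: "y2 \<in> mkC ` RR mkC C" and eq: "PGm (mkC S1) = PGm y2"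
    from y2 obtain S2 where S2: "S2 \<in> RR mkC C" "y2 = mkC S2" by blast
    have "mkD (rimg g1 PGm S1) = mkD (rimg g1 PGm S2)" using eq S2 sG[OF S1] sG[OF S2(1)] by simp
    then have E: "rimg g1 PGm S1 = rimg g1 PGm S2"
      using uD rG[OF S1] rG[OF S2(1)] by (simp add: inj_on_eq_iff)
    have "S1 = S2"
    proof (rule set_eqI)
      fix u show "u \<in> S1 \<longleftrightarrow> u \<in> S2"
      proof (cases u)
        case (Inl c)
        have "Inl c \<in> S1 \<longleftrightarrow> Inl c \<in> S2"
        proof
          assume c: "Inl c \<in> S1"
          then have "Inl (g1 c) \<in> rimg g1 PGm S1" by auto
          then have "Inl (g1 c) \<in> rimg g1 PGm S2" using E by simp
          then obtain c' where c': "Inl c' \<in> S2" "g1 c = g1 c'" by auto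
          have "c \<in> C" "c' \<in> C" using RR_atoms[OF S1 c] RR_atoms[OF S2(1) c'(1)] .
          with c' ginj have "c = c'" by (metis inj_onD)
          with c' show "Inl c \<in> S2" by simp
        next
          assume c: "Inl c \<in> S2"
          then have "Inl (g1 c) \<in> rimg g1 PGm S2" by auto
          then have "Inl (g1 c) \<in> rimg g1 PGm S1" using E by simp
          then obtain c' where c': "Inl c' \<in> S1" "g1 c = g1 c'" by auto
          have "c \<in> C" "c' \<in> C" using RR_atoms[OF S2(1) c] RR_atoms[OF S1 c'(1)] .
          with c' ginj have "c = c'" by (metis inj_onD)
          with c' show "Inl c \<in> S1" by simp
        qed
        then show ?thesis using Inl by simp
      next
        case (Inr y)
        have "Inr y \<in> S1 \<longleftrightarrow> Inr y \<in> S2"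
        proof
          assume y: "Inr y \<in> S1"
          then have "Inr (PGm y) \<in> rimg g1 PGm S1" by auto
          then have "Inr (PGm y) \<in> rimg g1 PGm S2" using E by simp
          then obtain y' where y': "Inr y' \<in> S2" "PGm y = PGm y'" by auto
          have "y' \<in> mkC ` RR mkC C" using RR_sets[OF S2(1) y'(1)] .
          with IH[OF y] y'(2) have "y = y'" by blast
          with y' show "Inr y \<in> S2" by simp
        next
          assume y: "Inr y \<in> S2"
          then have "Inr (PGm y) \<in> rimg g1 PGm S2" by auto
          then have "Inr (PGm y) \<in> rimg g1 PGm S1" using E by simp
          then obtain y' where y': "Inr y' \<in> S1" "PGm y = PGm y'" by auto
          have "y \<in> mkC ` RR mkC C" using RR_sets[OF S2(1) y] .
          with IH[OF y'(1)] y'(2) have "y' = y" by metis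
          with y' show "Inr y \<in> S1" by simp
        qed
        then show ?thesis using Inr by simp
      qed
    qed
    then show "mkC S1 = y2" using S2 by simp
  qed
qed

lemma PG_inj:
  "y1 \<in> mkC ` RR mkC C \<Longrightarrow> y2 \<in> mkC ` RR mkC C \<Longrightarrow> PGm y1 = PGm y2 \<Longrightarrow> y1 = y2"
  using PG_inj_all by blast

lemma B_det_C:
  assumes z: "z \<in> mkA ` RR mkA A" and z': "z' \<in> mkA ` RR mkA A" and e: "PBm z = PBm z'"
  shows "PCm z = PCm z'"
proof (rule PG_inj[OF ppC[OF z] ppC[OF z']])
  have "PGm (PCm z) = PFm (PBm z)" using comm[OF z] by simp
  also have "\<dots> = PFm (PBm z')" using e by simp
  also have "\<dots> = PGm (PCm z')" using comm[OF z'] by simp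
  finally show "PGm (PCm z) = PGm (PCm z')" .
qed

lemma atom_incl:
  assumes S1: "S1 \<in> RR mkA A" and S2: "S2 \<in> RR mkA A"
    and E: "rimg piB PBm S1 = rimg piB PBm S2" and a: "Inl a \<in> S1"
  shows "Inl a \<in> S2"
proof -
  have "Inl (piB a) \<in> rimg piB PBm S1" using a by auto
  then have "Inl (piB a) \<in> rimg piB PBm S2" using E by simp
  then obtain a' where a': "Inl a' \<in> S2" "piB a = piB a'" by auto
  have aA: "a \<in> A" "a' \<in> A" using RR_atoms[OF S1 a] RR_atoms[OF S2 a'(1)] .
  have "g1 (piC a) = g1 (piC a')" using comm1[OF aA(1)] comm1[OF aA(2)] a'(2) by simp
  moreover have "piC a \<in> C" "piC a' \<in> C" using aA piCA by auto
  ultimately have "piC a = piC a'" using ginj by (metis inj_onD)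
  with aA a'(2) have "a = a'" by (rule pbuniq)
  with a' show ?thesis by simp
qed

lemma set_incl:
  assumes S1: "S1 \<in> RR mkA A" and S2: "S2 \<in> RR mkA A"
    and E: "rimg piB PBm S1 = rimg piB PBm S2" and z: "Inr z \<in> S1"
  shows "\<exists>z'. Inr z' \<in> S2 \<and> PBm z = PBm z' \<and> PCm z = PCm z'"
proof -
  have "Inr (PBm z) \<in> rimg piB PBm S1" using z by auto
  then have "Inr (PBm z) \<in> rimg piB PBm S2" using E by simp
  then obtain z' where z': "Inr z' \<in> S2" "PBm z = PBm z'" by auto
  have "PCm z = PCm z'" using B_det_C[OF RR_sets[OF S1 z] RR_sets[OF S2 z'(1)] z'(2)] .
  with z' show ?thesis by blast
qed

lemma uniq_all:
  assumes "z1 \<in> mkA ` RR mkA A"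
  shows "\<forall>z2 \<in> mkA ` RR mkA A. PBm z1 = PBm z2 \<and> PCm z1 = PCm z2 \<longrightarrow> z1 = z2"
  using assms
proof (rule PP_induct[where P="\<lambda>z1. \<forall>z2 \<in> mkA ` RR mkA A. PBm z1 = PBm z2 \<and> PCm z1 = PCm z2 \<longrightarrow> z1 = z2"])
  fix S1 assume S1: "S1 \<in> RR mkA A"
    and IH: "\<And>x. Inr x \<in> S1 \<Longrightarrow> \<forall>z2 \<in> mkA ` RR mkA A. PBm x = PBm z2 \<and> PCm x = PCm z2 \<longrightarrow> x = z2"
  show "\<forall>z2 \<in> mkA ` RR mkA A. PBm (mkA S1) = PBm z2 \<and> PCm (mkA S1) = PCm z2 \<longrightarrow> mkA S1 = z2"
  proof (intro ballI impI)
    fix z2 assume z2: "z2 \<in> mkA ` RR mkA A" and eq: "PBm (mkA S1) = PBm z2 \<and> PCm (mkA S1) = PCm z2"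
    from z2 obtain S2 where S2: "S2 \<in> RR mkA A" "z2 = mkA S2" by blast
    have "mkB (rimg piB PBm S1) = mkB (rimg piB PBm S2)" using eq S2 sB[OF S1] sB[OF S2(1)] by simp
    then have E: "rimg piB PBm S1 = rimg piB PBm S2"
      using uB rB[OF S1] rB[OF S2(1)] by (simp add: inj_on_eq_iff)
    have "S1 = S2"
    proof (rule set_eqI)
      fix u show "u \<in> S1 \<longleftrightarrow> u \<in> S2"
      proof (cases u)
        case (Inl a)
        have "Inl a \<in> S1 \<longleftrightarrow> Inl a \<in> S2"
          using atom_incl[OF S1 S2(1) E] atom_incl[OF S2(1) S1 E[symmetric]] by blast
        then show ?thesis using Inl by simp
      next
        case (Inr z)
        have "Inr z \<in> S1 \<longleftrightarrow> Inr z \<in> S2"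
        proof
          assume z: "Inr z \<in> S1"
          from set_incl[OF S1 S2(1) E z] obtain z' where z': "Inr z' \<in> S2" "PBm z = PBm z'" "PCm z = PCm z'"
            by blast
          have "z' \<in> mkA ` RR mkA A" using RR_sets[OF S2(1) z'(1)] .
          with IH[OF z] z'(2,3) have "z = z'" by blast
          with z' show "Inr z \<in> S2" by simp
        next
          assume z: "Inr z \<in> S2"
          from set_incl[OF S2(1) S1 E[symmetric] z] obtain z' where z': "Inr z' \<in> S1" "PBm z = PBm z'" "PCm z = PCm z'"
            by blast
          have "z \<in> mkA ` RR mkA A" using RR_sets[OF S2(1) z] .
          with IH[OF z'(1)] z'(2,3) have "z' = z" by metis
          with z' show "Inr z \<in> S1" by simp
        qed
        then show ?thesis using Inr by simp
      qed
    qed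
    then show "mkA S1 = z2" using S2 by simp
  qed
qed

lemma uniq:
  "z1 \<in> mkA ` RR mkA A \<Longrightarrow> z2 \<in> mkA ` RR mkA A \<Longrightarrow> PBm z1 = PBm z2 \<Longrightarrow> PCm z1 = PCm z2 \<Longrightarrow> z1 = z2"
  using uniq_all by blast

lemma exist:
  "\<forall>SX \<in> pp_raw mkB B n. \<forall>T \<in> RR mkC C. PFm (mkB SX) = PGm (mkC T) \<longrightarrow>
     (\<exists>S \<in> pp_raw mkA A n. PBm (mkA S) = mkB SX \<and> PCm (mkA S) = mkC T)"
proof (induction n rule: less_induct)
  case (less n)
  show ?case
  proof (intro ballI impI)
    fix SX T assume SX: "SX \<in> pp_raw mkB B n" and T: "T \<in> RR mkC C"
      and eq: "PFm (mkB SX) = PGm (mkC T)"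
    have SXR: "SX \<in> RR mkB B" using SX by blast
    have "mkD (rimg f1 PFm SX) = mkD (rimg g1 PGm T)" using eq sF[OF SXR] sG[OF T] by simp
    then have E: "rimg f1 PFm SX = rimg g1 PGm T"
      using uD rF[OF SXR] rG[OF T] by (simp add: inj_on_eq_iff)
    from pp_shape[OF SX] show "\<exists>S \<in> pp_raw mkA A n. PBm (mkA S) = mkB SX \<and> PCm (mkA S) = mkC T"
    proof
      assume L: "SX \<subseteq> Inl ` B"
      have noT: "Inr y \<notin> T" for y
      proof
        assume y: "Inr y \<in> T"
        then have "Inr (PGm y) \<in> rimg g1 PGm T" by auto
        then have "Inr (PGm y) \<in> rimg f1 PFm SX" using E by simp
        then obtain x where "Inr x \<in> SX" by auto
        with L show False by auto
      qed
      define S :: "('a + 'va) set" where "S = Inl ` {a. a \<in> A \<and> Inl (piB a) \<in> SX \<and> Inl (piC a) \<in> T}"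
      have S0: "S \<in> pp_raw mkA A 0" unfolding S_def by auto
      then have Sn: "S \<in> pp_raw mkA A n" using pp_mono[of 0 n] by blast
      have SR: "S \<in> RR mkA A" using S0 by blast
      have "rimg piB PBm S = SX"
      proof (rule set_eqI)
        fix u show "u \<in> rimg piB PBm S \<longleftrightarrow> u \<in> SX"
        proof (cases u)
          case (Inl b)
          have "Inl b \<in> rimg piB PBm S \<longleftrightarrow> Inl b \<in> SX"
          proof
            assume "Inl b \<in> rimg piB PBm S"
            then show "Inl b \<in> SX" unfolding S_def by auto
          next
            assume b: "Inl b \<in> SX"
            have bB: "b \<in> B" using L b by (rule subInl)
            have "Inl (f1 b) \<in> rimg f1 PFm SX" using b by auto
            then have "Inl (f1 b) \<in> rimg g1 PGm T" using E by simp
            then obtain c where c: "Inl c \<in> T" "f1 b = g1 c" by auto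
            have cC: "c \<in> C" using RR_atoms[OF T c(1)] .
            from pbex[OF bB cC c(2)] obtain a where a: "a \<in> A" "piB a = b" "piC a = c" by blast
            then have "Inl a \<in> S" unfolding S_def using b c by auto
            with a show "Inl b \<in> rimg piB PBm S" by auto
          qed
          then show ?thesis using Inl by simp
        next
          case (Inr x)
          have "Inr x \<notin> rimg piB PBm S" unfolding S_def by auto
          moreover have "Inr x \<notin> SX" using L by auto
          ultimately show ?thesis using Inr by simp
        qed
      qed
      moreover have "rimg piC PCm S = T"
      proof (rule set_eqI)
        fix u show "u \<in> rimg piC PCm S \<longleftrightarrow> u \<in> T"
        proof (cases u)
          case (Inl c)
          have "Inl c \<in> rimg piC PCm S \<longleftrightarrow> Inl c \<in> T"
          proof
            assume "Inl c \<in> rimg piC PCm S"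
            then show "Inl c \<in> T" unfolding S_def by auto
          next
            assume c: "Inl c \<in> T"
            have cC: "c \<in> C" using RR_atoms[OF T c] .
            have "Inl (g1 c) \<in> rimg g1 PGm T" using c by auto
            then have "Inl (g1 c) \<in> rimg f1 PFm SX" using E by simp
            then obtain b where b: "Inl b \<in> SX" "g1 c = f1 b" by auto
            have bB: "b \<in> B" using L b(1) by (rule subInl)
            from pbex[OF bB cC b(2)[symmetric]] obtain a where a: "a \<in> A" "piB a = b" "piC a = c" by blast
            then have "Inl a \<in> S" unfolding S_def using b c by auto
            with a show "Inl c \<in> rimg piC PCm S" by auto
          qed
          then show ?thesis using Inl by simp
        next
          case (Inr y)
          have "Inr y \<notin> rimg piC PCm S" unfolding S_def by auto
          moreover have "Inr y \<notin> T" by (rule noT)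
          ultimately show ?thesis using Inr by simp
        qed
      qed
      ultimately show ?thesis using Sn sB[OF SR] sC[OF SR] by auto
    next
      assume "\<exists>m. n = Suc m \<and> SX \<subseteq> Inr ` mkB ` pp_raw mkB B m"
      then obtain m where m: "n = Suc m" "SX \<subseteq> Inr ` mkB ` pp_raw mkB B m" by blast
      have noT: "Inl c \<notin> T" for c
      proof
        assume c: "Inl c \<in> T"
        then have "Inl (g1 c) \<in> rimg g1 PGm T" by auto
        then have "Inl (g1 c) \<in> rimg f1 PFm SX" using E by simp
        then obtain b where "Inl b \<in> SX" by auto
        with m(2) show False by auto
      qed
      have "\<forall>x. \<exists>z. Inr x \<in> SX \<longrightarrow> z \<in> mkA ` pp_raw mkA A m \<and> PBm z = x \<and> Inr (PCm z) \<in> T"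
      proof
        fix x show "\<exists>z. Inr x \<in> SX \<longrightarrow> z \<in> mkA ` pp_raw mkA A m \<and> PBm z = x \<and> Inr (PCm z) \<in> T"
        proof (cases "Inr x \<in> SX")
          case True
          with m(2) have "Inr x \<in> Inr ` mkB ` pp_raw mkB B m" by blast
          then obtain SX' where SX': "SX' \<in> pp_raw mkB B m" "x = mkB SX'" by auto
          have "Inr (PFm x) \<in> rimg f1 PFm SX" using True by auto
          then have "Inr (PFm x) \<in> rimg g1 PGm T" using E by simp
          then obtain y where y: "Inr y \<in> T" "PFm x = PGm y" by auto
          from RR_sets[OF T y(1)] obtain T' where T': "T' \<in> RR mkC C" "y = mkC T'" by blast
          have "m < n" using m(1) by simp
          from less[OF this] SX'(1) T'(1) y(2) SX'(2) T'(2)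
          obtain S' where S': "S' \<in> pp_raw mkA A m" "PBm (mkA S') = x" "PCm (mkA S') = y"
            by blast
          then have "mkA S' \<in> mkA ` pp_raw mkA A m \<and> PBm (mkA S') = x \<and> Inr (PCm (mkA S')) \<in> T"
            using y(1) by simp
          then show ?thesis by blast
        qed simp
      qed
      from choice[OF this] obtain zf where
        zf: "\<forall>x. Inr x \<in> SX \<longrightarrow> zf x \<in> mkA ` pp_raw mkA A m \<and> PBm (zf x) = x \<and> Inr (PCm (zf x)) \<in> T"
        ..
      define S :: "('a + 'va) set" where "S = (\<lambda>x. Inr (zf x)) ` {x. Inr x \<in> SX}"
      have Sn: "S \<in> pp_raw mkA A n" unfolding S_def m(1) using zf by auto
      have SR: "S \<in> RR mkA A" using Sn by blast
      have "rimg piB PBm S = SX"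
      proof (rule set_eqI)
        fix u show "u \<in> rimg piB PBm S \<longleftrightarrow> u \<in> SX"
        proof (cases u)
          case (Inl b)
          have "Inl b \<notin> rimg piB PBm S" unfolding S_def by auto
          moreover have "Inl b \<notin> SX" using m(2) by auto
          ultimately show ?thesis using Inl by simp
        next
          case (Inr x)
          have "Inr x \<in> rimg piB PBm S \<longleftrightarrow> Inr x \<in> SX"
          proof
            assume "Inr x \<in> rimg piB PBm S"
            then obtain x0 where "Inr x0 \<in> SX" "x = PBm (zf x0)" unfolding S_def by auto
            with zf show "Inr x \<in> SX" by simp
          next
            assume x: "Inr x \<in> SX"
            then have "Inr (zf x) \<in> S" unfolding S_def by auto
            moreover have "x = PBm (zf x)" using zf x by simp
            ultimately show "Inr x \<in> rimg piB PBm S" by auto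
          qed
          then show ?thesis using Inr by simp
        qed
      qed
      moreover have "rimg piC PCm S = T"
      proof (rule set_eqI)
        fix u show "u \<in> rimg piC PCm S \<longleftrightarrow> u \<in> T"
        proof (cases u)
          case (Inl c)
          have "Inl c \<notin> rimg piC PCm S" unfolding S_def by auto
          moreover have "Inl c \<notin> T" by (rule noT)
          ultimately show ?thesis using Inl by simp
        next
          case (Inr y)
          have "Inr y \<in> rimg piC PCm S \<longleftrightarrow> Inr y \<in> T"
          proof
            assume "Inr y \<in> rimg piC PCm S"
            then obtain x0 where "Inr x0 \<in> SX" "y = PCm (zf x0)" unfolding S_def by auto
            with zf show "Inr y \<in> T" by simp
          next
            assume y: "Inr y \<in> T"
            then have "Inr (PGm y) \<in> rimg g1 PGm T" by auto
            then have "Inr (PGm y) \<in> rimg f1 PFm SX" using E by simp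
            then obtain x where x: "Inr x \<in> SX" "PGm y = PFm x" by auto
            have zx: "zf x \<in> mkA ` pp_raw mkA A m" "PBm (zf x) = x" "Inr (PCm (zf x)) \<in> T"
              using zf x(1) by auto
            have zR: "zf x \<in> mkA ` RR mkA A" using zx(1) by blast
            have "PGm (PCm (zf x)) = PFm (PBm (zf x))" using comm[OF zR] by simp
            also have "\<dots> = PGm y" using zx(2) x(2) by simp
            finally have "PCm (zf x) = y"
              using PG_inj[OF RR_sets[OF T zx(3)] RR_sets[OF T y]] by blast
            moreover have "Inr (zf x) \<in> S" unfolding S_def using x(1) by auto
            ultimately show "Inr y \<in> rimg piC PCm S" by auto
          qed
          then show ?thesis using Inr by simp
        qed
      qed
      ultimately show ?thesis using Sn sB[OF SR] sC[OF SR] by auto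
    qed
  qed
qed

lemma main: "is_pullback (mkA ` RR mkA A) (mkB ` RR mkB B) (mkC ` RR mkC C) (mkD ` RR mkD D)
           PBm PCm PFm PGm"
  unfolding is_pullback_def
proof (intro conjI ballI impI)
  show "PBm ` mkA ` RR mkA A \<subseteq> mkB ` RR mkB B" using ppB by blast
  show "PCm ` mkA ` RR mkA A \<subseteq> mkC ` RR mkC C" using ppC by blast
  show "PFm ` mkB ` RR mkB B \<subseteq> mkD ` RR mkD D" using ppF by blast
  show "PGm ` mkC ` RR mkC C \<subseteq> mkD ` RR mkD D" using ppG by blast
  fix z assume "z \<in> mkA ` RR mkA A" then show "PFm (PBm z) = PGm (PCm z)" by (rule comm)
next
  fix X Y assume X: "X \<in> mkB ` RR mkB B" and Y: "Y \<in> mkC ` RR mkC C" and eq: "PFm X = PGm Y"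
  from X obtain SX n where SX: "SX \<in> pp_raw mkB B n" "X = mkB SX" by blast
  from Y obtain T where T: "T \<in> RR mkC C" "Y = mkC T" by blast
  from exist[of n] SX T eq obtain S where S: "S \<in> pp_raw mkA A n" "PBm (mkA S) = X" "PCm (mkA S) = Y"
    by blast
  show "\<exists>!Z. Z \<in> mkA ` RR mkA A \<and> PBm Z = X \<and> PCm Z = Y"
  proof (rule ex1I)
    show "mkA S \<in> mkA ` RR mkA A \<and> PBm (mkA S) = X \<and> PCm (mkA S) = Y" using S by blast
    fix Z assume Z: "Z \<in> mkA ` RR mkA A \<and> PBm Z = X \<and> PCm Z = Y"
    have "mkA S \<in> mkA ` RR mkA A" using S by blast
    with Z S show "Z = mkA S" using uniq by metis
  qed
qed

end


theorem mainTheorem6: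
  fixes A :: "'a set" and B :: "'b set" and C :: "'c set" and D :: "'d set"
    and piB :: "'a \<Rightarrow> 'b" and piC :: "'a \<Rightarrow> 'c"
    and f1 :: "'b \<Rightarrow> 'd" and g1 :: "'c \<Rightarrow> 'd"
    and mkA :: "('a + 'va) set \<Rightarrow> 'va" and mkB :: "('b + 'vb) set \<Rightarrow> 'vb"
    and mkC :: "('c + 'vc) set \<Rightarrow> 'vc" and mkD :: "('d + 'vd) set \<Rightarrow> 'vd"
  assumes "is_pullback A B C D piB piC f1 g1"
    and "inj_on g1 C"
    and "pp_universe mkA A" and "pp_universe mkB B"
    and "pp_universe mkC C" and "pp_universe mkD D"
  shows "is_pullback (PPb mkA A) (PPb mkB B) (PPb mkC C) (PPb mkD D)
           (ppmap mkA mkB A piB) (ppmap mkA mkC A piC)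
           (ppmap mkB mkD B f1) (ppmap mkC mkD C g1)"
proof -
  have "pbk A B C D piB piC f1 g1 mkA mkB mkC mkD"
    using assms unfolding pbk_def pp_universe_def by blast
  then show ?thesis unfolding PPb_def by (rule pbk.main)
qed

end
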